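(* Let $g(x)=\alpha x^{q^k}+\beta x$ with $\alpha\in\mathbb{F}_{q^n}^*$, $\beta\in\mathbb{F}_{q^n}$, $1\le k<n$. Let $f(y)=a_dy^{q^d}+a_\ell y^{q^\ell}$ with $0\le \ell<d<n$ and $a_d,a_\ell\in\mathbb{F}_{q^n}^*$, and let $0\le h<n$. Assume that either ($d=h$ and $a_d=\beta$) or ($\ell=h$ and $a_\ell=\beta$). Set $t=\ell$ if $h=d$, and $t=d$ if $h=\ell$. Then $L_f\cap L_g\ne\emptyset$ if and only if $\mathrm{N}_{q^n/q^e}(a_t/\alpha)=1$, where $e=\gcd(n,k,t-h)$.
   Context: Let $q$ be a prime power, $n\ge2$. For $e\mid n$, $\mathrm{N}_{q^n/q^e}(x)=x^{(q^n-1)/(q^e-1)}$. For $q$-polynomials $g,f$ over $\mathbb{F}_{q^n}$ and an integer $0\le h<n$: $L_g=\{\langle(x,g(x))\rangle_{\mathbb{F}_{q^n}}:x\in\mathbb{F}_{q^n}^*\}$ and $L_f=\{\langle(y^{q^h},f(y))\rangle_{\mathbb{F}_{q^n}}:y\in\mathbb{F}_{q^n}^*\}$. *)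

theory Defs
  imports "HOL-Number_Theory.Number_Theory" "HOL-Library.Cardinality"
begin

definition relnorm :: "nat \<Rightarrow> nat \<Rightarrow> nat \<Rightarrow> 'a::field \<Rightarrow> 'a" where
  "relnorm q n e x = x ^ ((q ^ n - 1) div (q ^ e - 1))"

definition pspan :: "'a::field \<times> 'a \<Rightarrow> ('a \<times> 'a) set" where
  "pspan v = {(c * fst v, c * snd v) | c. True}"

definition Lg_set :: "('a::field \<Rightarrow> 'a) \<Rightarrow> ('a \<times> 'a) set set" where
  "Lg_set g = {pspan (x, g x) | x. x \<noteq> 0}"

definition Lf_set :: "nat \<Rightarrow> nat \<Rightarrow> ('a::field \<Rightarrow> 'a) \<Rightarrow> ('a \<times> 'a) set set" where
  "Lf_set q h f = {pspan (y ^ (q ^ h), f y) | y. y \<noteq> 0}"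

end

theory Submission imports Defs "HOL-Library.Cardinality" "HOL-Algebra.Multiplicative_Group" "HOL-Number_Theory.Number_Theory" begin
definition FR :: "'a::field ring" where
 "FR = \<lparr>carrier = UNIV, monoid.mult = (\<lambda>x y. x * y), one = 1, ring.zero = 0, add = (\<lambda>x y. x + y)\<rparr>"
lemma field_FR: "field (FR :: 'a::field ring)"
proof -
  have "\<exists>y. x + y = 0" for x :: 'a
    using add.right_inverse by blast
  moreover have "\<exists>y. x * y = 1" if "x \<noteq> 0" for x :: 'a using that by (intro exI[of _ "inverse x"]) simp
  ultimately show ?thesis
    unfolding FR_def using add.right_inverse
    by unfold_locales (auto simp:algebra_simps Units_def field_simps)
qed
lemma pow_FR: "x [^]\<^bsub>(FR :: 'a::field ring)\<^esub> (i::nat) = x ^ i"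
  by (induction i) (simp_all add: FR_def)
lemma gen_exists: "\<exists>\<gamma>::'a::{field,finite}. \<gamma> \<noteq> 0 \<and> (\<forall>x. x \<noteq> 0 \<longrightarrow> (\<exists>i::nat. x = \<gamma>^i))"
proof -
  let ?R = "FR :: 'a ring"
  interpret field ?R by (rule field_FR)
  have "finite (carrier ?R)" by (simp add: FR_def)
  from finite_field_mult_group_has_gen[OF this] obtain a where
    a0: "a \<in> carrier (Multiplicative_Group.mult_of ?R)" and a: "carrier (Multiplicative_Group.mult_of ?R) = {a[^]\<^bsub>?R\<^esub> i | i::nat . i \<in> UNIV}" by blast
  have "a \<noteq> 0" using a0 by (simp add: FR_def)
  moreover have "\<forall>x. x \<noteq> 0 \<longrightarrow> (\<exists>i::nat. x = a^i)"
  proof (intro allI impI)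
    fix x :: 'a assume "x \<noteq> 0"
    then have "x \<in> carrier (Multiplicative_Group.mult_of ?R)" by (simp add: FR_def)
    then have "x \<in> {a[^]\<^bsub>?R\<^esub> i | i::nat . i \<in> UNIV}" using a by (metis (no_types, lifting))
    then obtain i::nat where "x = a[^]\<^bsub>?R\<^esub> i" by blast
    then show "\<exists>i. x = a ^ i" by (auto simp: pow_FR)
  qed
  ultimately show ?thesis by blast
qed
lemma F1:
  fixes x :: "'a::{field,finite}" assumes "x \<noteq> 0"
  shows "x ^ (CARD('a) - 1) = 1"
proof -
  interpret field "FR :: 'a ring" by (rule field_FR)
  interpret G: group "Multiplicative_Group.mult_of (FR :: 'a ring)" by (rule field_mult_group)
  have fin: "finite (carrier (FR::'a ring))" by (simp add: FR_def)
  have "x \<in> carrier (Multiplicative_Group.mult_of (FR :: 'a ring))" using assms by (simp add: FR_def)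
  then have "x [^]\<^bsub>Multiplicative_Group.mult_of (FR :: 'a ring)\<^esub> order (Multiplicative_Group.mult_of (FR :: 'a ring)) = \<one>\<^bsub>Multiplicative_Group.mult_of (FR :: 'a ring)\<^esub>"
    by (rule G.pow_order_eq_1)
  moreover have "order (Multiplicative_Group.mult_of (FR :: 'a ring)) = CARD('a) - 1"
    using order_mult_of[OF fin] by (simp add: order_def FR_def)
  ultimately have "x [^]\<^bsub>(FR :: 'a ring)\<^esub> (CARD('a) - 1) = \<one>\<^bsub>(FR :: 'a ring)\<^esub>" by (simp add: nat_pow_mult_of)
  moreover have "\<one>\<^bsub>(FR :: 'a ring)\<^esub> = (1::'a)" by (simp add: FR_def)
  ultimately show ?thesis by (simp add: pow_FR)
qed

lemma F1mult:
  fixes x :: "'a::{field,finite}" assumes "x \<noteq> 0" "(CARD('a) - 1) dvd m"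
  shows "x ^ m = 1"
  using assms F1[OF assms(1)] by (auto simp: power_mult)

lemma Fid:
  fixes x :: "'a::{field,finite}"
  shows "x ^ CARD('a) = x"
proof (cases "x = 0")
  case True then show ?thesis by simp
next
  case False
  have "CARD('a) = Suc (CARD('a) - 1)" using finite_UNIV_card_ge_0[where 'a='a] by simp
  then have "x ^ CARD('a) = x * x ^ (CARD('a) - 1)" by (metis power_Suc)
  then show ?thesis using F1[OF False] by simp
qed

lemma Fid_iter:
  fixes x :: "'a::{field,finite}" and q n :: nat assumes "CARD('a) = q ^ n"
  shows "x ^ (q ^ (n * j)) = x"
proof (induction j)
  case 0 then show ?case by simp
next
  case (Suc j)
  have "x ^ (q ^ (n * Suc j)) = (x ^ (q ^ (n*j))) ^ (q ^ n)"
    by (simp add: power_add power_mult[symmetric] mult.commute)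
  also have "\<dots> = x" using Suc Fid[of x] assms by simp
  finally show ?case .
qed

lemma frob_surj:
  fixes w :: "'a::{field,finite}" and q n m :: nat assumes "CARD('a) = q ^ n" "n \<ge> 1"
  shows "\<exists>y. y ^ (q ^ m) = w \<and> (w \<noteq> 0 \<longrightarrow> y \<noteq> 0)"
proof -
  have le: "m \<le> n * m" using assms by simp
  let ?y = "w ^ (q ^ (n*m - m))"
  have "?y ^ (q ^ m) = w ^ (q ^ (n*m - m + m))"
    by (simp add: power_add power_mult[symmetric])
  also have "n*m - m + m = n * m" using le by simp
  finally have "?y ^ (q ^ m) = w" using Fid_iter[OF assms(1)] by simp
  then show ?thesis by (intro exI[of _ ?y]) auto
qed

lemma gen_order:
  fixes \<gamma> :: "'a::{field,finite}"
  assumes g0: "\<gamma> \<noteq> 0" and gen: "\<forall>x. x \<noteq> 0 \<longrightarrow> (\<exists>i::nat. x = \<gamma>^i)" and "\<gamma> ^ j = 1"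
  shows "(CARD('a) - 1) dvd j"
proof -
  let ?N = "CARD('a) - 1"
  have modp: "\<gamma> ^ i = \<gamma> ^ (i mod ?N)" for i
  proof -
    have "\<gamma> ^ i = \<gamma> ^ (?N * (i div ?N) + i mod ?N)" by simp
    also have "\<dots> = \<gamma> ^ (?N * (i div ?N)) * \<gamma> ^ (i mod ?N)" by (rule power_add)
    also have "\<gamma> ^ (?N * (i div ?N)) = 1" by (rule F1mult[OF g0]) simp
    finally show ?thesis by simp
  qed
  have Npos: "?N > 0"
  proof -
    have "card {0::'a, 1} \<le> CARD('a)" by (rule card_mono) auto
    then have "CARD('a) \<ge> 2" by simp
    then show ?thesis by simp
  qed
  have im: "(\<lambda>i. \<gamma> ^ i) ` {0..<?N} = UNIV - {0}"
  proof
    show "(\<lambda>i. \<gamma> ^ i) ` {0..<?N} \<subseteq> UNIV - {0}" using g0 by auto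
    show "UNIV - {0} \<subseteq> (\<lambda>i. \<gamma> ^ i) ` {0..<?N}"
    proof
      fix x :: 'a assume "x \<in> UNIV - {0}"
      then obtain i where "x = \<gamma> ^ i" using gen by auto
      then have "x = \<gamma> ^ (i mod ?N)" using modp by simp
      moreover have "i mod ?N \<in> {0..<?N}" using Npos by simp
      ultimately show "x \<in> (\<lambda>i. \<gamma> ^ i) ` {0..<?N}" by blast
    qed
  qed
  have "card (UNIV - {0::'a}) = ?N" by (simp add: card_Diff_singleton)
  then have "card ((\<lambda>i. \<gamma> ^ i) ` {0..<?N}) = card {0..<?N}" using im by simp
  then have inj: "inj_on (\<lambda>i. \<gamma> ^ i) {0..<?N}" by (rule eq_card_imp_inj_on[OF finite_atLeastLessThan])
  have "\<gamma> ^ (j mod ?N) = \<gamma> ^ 0" using assms(3) modp by simp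
  moreover have "j mod ?N \<in> {0..<?N}" "(0::nat) \<in> {0..<?N}" using Npos by auto
  ultimately have "j mod ?N = 0" using inj_onD[OF inj] by blast
  then show ?thesis by auto
qed
lemma gcd_pow_minus1:
  fixes Q :: int assumes "Q \<ge> 1"
  shows "gcd (Q^a - 1) (Q^b - 1) = Q^(gcd a b) - 1"
proof (induction a b rule: gcd_nat_induct)
  case (step m n)
  have d: "(Q^n - 1) dvd (Q^(n*(m div n)) - 1)"
  proof -
    have "[Q^n = 1] (mod Q^n - 1)" by (simp add: cong_iff_dvd_diff)
    then have "[(Q^n)^(m div n) = 1^(m div n)] (mod Q^n - 1)" by (rule cong_pow)
    then show ?thesis by (simp add: cong_iff_dvd_diff power_mult)
  qed
  then obtain r where r: "Q^(n*(m div n)) - 1 = (Q^n - 1) * r" by blast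
  have "Q^m - 1 = (Q^(m mod n) - 1) + Q^(m mod n) * (Q^(n*(m div n)) - 1)"
  proof -
    have mm: "m mod n + n*(m div n) = m" by simp
    have "Q^(m mod n + n*(m div n)) = Q^(m mod n) * Q^(n*(m div n))" by (rule power_add)
    then have "Q^m = Q^(m mod n) * Q^(n*(m div n))" by (simp only: mm)
    then show ?thesis by (simp add: algebra_simps)
  qed
  also have "\<dots> = (Q^(m mod n) - 1) + (Q^(m mod n) * r) * (Q^n - 1)" using r by simp
  finally have X: "Q^m - 1 = (Q^(m mod n) * r) * (Q^n - 1) + (Q^(m mod n) - 1)" by simp
  have "gcd (Q^m - 1) (Q^n - 1) = gcd (Q^n - 1) (Q^m - 1)" by (rule gcd.commute)
  also have "\<dots> = gcd (Q^n - 1) (Q^(m mod n) - 1)" unfolding X by (rule gcd_add_mult)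
  also have "\<dots> = gcd (Q^(m mod n) - 1) (Q^n - 1)" by (rule gcd.commute)
  finally have "gcd (Q^m - 1) (Q^n - 1) = gcd (Q^(m mod n) - 1) (Q^n - 1)" .
  also have "\<dots> = Q^(gcd n (m mod n)) - 1" using step by (simp add: gcd.commute)
  also have "gcd n (m mod n) = gcd m n" by (metis gcd.commute gcd_red_nat)
  finally show ?case .
next
  case (base m)
  have "Q^m \<ge> 1" using assms by simp
  then show ?case by simp
qed

lemma pow_mod_eq:
  fixes x :: "'a::{field,finite}"
  assumes "x \<noteq> 0" "a mod (CARD('a) - 1) = b mod (CARD('a) - 1)"
  shows "x ^ a = x ^ b"
proof -
  let ?N = "CARD('a) - 1"
  have "x ^ i = x ^ (i mod ?N)" for i
  proof -
    have "x ^ i = x ^ (?N * (i div ?N) + i mod ?N)" by simp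
    also have "\<dots> = x ^ (?N * (i div ?N)) * x ^ (i mod ?N)" by (rule power_add)
    also have "x ^ (?N * (i div ?N)) = 1" by (rule F1mult[OF assms(1)]) simp
    finally show ?thesis by simp
  qed
  then show ?thesis using assms(2) by metis
qed

lemma int_pow_minus1: "q \<ge> 1 \<Longrightarrow> int (q ^ a - 1) = int q ^ a - 1"
  by (simp add: of_nat_diff)

lemma core:
  fixes A :: "'a::{field,finite}" and q n k s e :: nat
  assumes card: "CARD('a) = q^n" and q2: "q \<ge> 2" and n1: "n \<ge> 1" and e: "e = gcd k (gcd s n)"
  shows "(\<exists>c z. c \<noteq> 0 \<and> z \<noteq> 0 \<and> c^(q^k-1) * z^(q^s-1) = A) \<longleftrightarrow> A ^ ((q^n-1) div (q^e-1)) = 1"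
proof -
  define Q where "Q = int q"
  have Q1: "Q \<ge> 1" using q2 by (simp add: Q_def)
  define N where "N = q^n - 1"
  define E where "E = q^e - 1"
  define M where "M = N div E"
  have cardN: "CARD('a) - 1 = N" using card by (simp add: N_def)
  have G3: "gcd (Q^k-1) (gcd (Q^s-1) (Q^n-1)) = Q^e - 1"
    using gcd_pow_minus1[OF Q1] e by simp
  have iE: "int E = Q^e - 1" using q2 by (simp add: E_def Q_def of_nat_diff)
  have iN: "int N = Q^n - 1" using q2 by (simp add: N_def Q_def of_nat_diff)
  have ik: "int (q^k - 1) = Q^k - 1" using q2 by (simp add: Q_def of_nat_diff)
  have isv: "int (q^s - 1) = Q^s - 1" using q2 by (simp add: Q_def of_nat_diff)
  have dk: "E dvd (q^k - 1)"
  proof -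
    have "int E dvd int (q^k - 1)" unfolding iE ik G3[symmetric] by simp
    then show ?thesis by simp
  qed
  have ds: "E dvd (q^s - 1)"
  proof -
    have "int E dvd int (q^s - 1)" unfolding iE isv G3[symmetric] by (metis gcd_dvd1 gcd_dvd2 dvd_trans)
    then show ?thesis by simp
  qed
  have dn: "E dvd N"
  proof -
    have "int E dvd int N" unfolding iE iN G3[symmetric] by (metis gcd_dvd1 gcd_dvd2 dvd_trans)
    then show ?thesis by simp
  qed
  have e1: "e \<ge> 1" using e n1 by (simp add: Suc_le_eq)
  have "q^e \<ge> q^1" using e1 q2 by (intro power_increasing) auto
  then have Epos: "E > 0" using q2 by (simp add: E_def)
  have "q^n \<ge> q^1" using n1 q2 by (intro power_increasing) auto
  then have Npos: "N > 0" using q2 by (simp add: N_def)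
  have NEM: "N = E * M" using dn by (simp add: M_def)
  have Mpos: "M > 0" using NEM Npos by (cases M) auto
  show ?thesis unfolding N_def[symmetric] E_def[symmetric] M_def[symmetric]
  proof
    assume "\<exists>c z. c \<noteq> 0 \<and> z \<noteq> 0 \<and> c^(q^k-1) * z^(q^s-1) = A"
    then obtain c z where cz: "c \<noteq> 0" "z \<noteq> 0" "A = c^(q^k-1) * z^(q^s-1)" by auto
    obtain u where u: "q^k - 1 = E * u" using dk by blast
    obtain v where v: "q^s - 1 = E * v" using ds by blast
    have "A ^ M = c ^ ((q^k-1) * M) * z ^ ((q^s-1) * M)"
      using cz(3) by (simp add: power_mult_distrib power_mult)
    also have "c ^ ((q^k-1) * M) = 1"
      by (rule F1mult[OF cz(1)]) (unfold cardN u NEM, simp)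
    also have "z ^ ((q^s-1) * M) = 1"
      by (rule F1mult[OF cz(2)]) (unfold cardN v NEM, simp)
    finally show "A ^ M = 1" by simp
  next
    assume AM: "A ^ M = 1"
    have A0: "A \<noteq> 0" using AM Mpos by (metis zero_neq_one zero_power)
    obtain \<gamma> :: 'a where g0: "\<gamma> \<noteq> 0" and gen: "\<forall>x. x \<noteq> 0 \<longrightarrow> (\<exists>i::nat. x = \<gamma>^i)" using gen_exists by blast
    obtain m where m: "A = \<gamma> ^ m" using gen A0 by blast
    have "\<gamma> ^ (m * M) = 1" using AM m by (simp add: power_mult)
    then have "N dvd m * M" using gen_order[OF g0 gen] cardN by metis
    then have "E * M dvd m * M" using NEM by simp
    then have "E dvd m" using Mpos by simp
    then obtain m' where m': "m = E * m'" by blast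
    obtain U V W :: int where UVW: "Q^e - 1 = U * (Q^k-1) + V * (Q^s-1) + W * (Q^n-1)"
    proof -
      obtain u1 v1 where 1: "u1 * (Q^k-1) + v1 * gcd (Q^s-1) (Q^n-1) = Q^e - 1"
        using bezout_int[of "Q^k-1" "gcd (Q^s-1) (Q^n-1)"] G3 by auto
      obtain u2 v2 where 2: "u2 * (Q^s-1) + v2 * (Q^n-1) = gcd (Q^s-1) (Q^n-1)"
        using bezout_int[of "Q^s-1" "Q^n-1"] by auto
      have "Q^e - 1 = u1 * (Q^k-1) + v1 * (u2 * (Q^s-1) + v2 * (Q^n-1))" using 1 2 by simp
      also have "\<dots> = u1 * (Q^k-1) + (v1*u2) * (Q^s-1) + (v1*v2) * (Q^n-1)" by (simp add: algebra_simps)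
      finally show ?thesis by (rule that)
    qed
    define i where "i = nat ((int m' * U) mod int N)"
    define j where "j = nat ((int m' * V) mod int N)"
    have ii: "int i = (int m' * U) mod int N" using Npos by (simp add: i_def)
    have ij: "int j = (int m' * V) mod int N" using Npos by (simp add: j_def)
    have c1: "[int i * (Q^k-1) + int j * (Q^s-1) = (int m' * U) * (Q^k-1) + (int m' * V) * (Q^s-1)] (mod int N)"
      unfolding ii ij by (intro cong_add cong_mult cong_refl) (simp_all add: cong_def)
    have "int m = int m' * (Q^e - 1)" using m' iE by simp
    also have "\<dots> = int m' * (U * (Q^k-1) + V * (Q^s-1) + W * (Q^n-1))" using UVW by simp
    also have "\<dots> = (int m' * U) * (Q^k-1) + (int m' * V) * (Q^s-1) + (int m' * W) * int N"
      unfolding iN by (simp add: algebra_simps)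
    finally have c2: "[(int m' * U) * (Q^k-1) + (int m' * V) * (Q^s-1) = int m] (mod int N)"
      by (simp add: cong_iff_dvd_diff)
    have eqi: "int (i * (q^k-1) + j * (q^s-1)) = int i * (Q^k-1) + int j * (Q^s-1)"
      by (simp only: of_nat_add of_nat_mult ik isv)
    have "[int (i * (q^k-1) + j * (q^s-1)) = int m] (mod int N)"
      unfolding eqi by (rule cong_trans[OF c1 c2])
    then have "[i * (q^k-1) + j * (q^s-1) = m] (mod N)" by (simp only: cong_int_iff)
    then have "\<gamma> ^ (i * (q^k-1) + j * (q^s-1)) = \<gamma> ^ m"
      by (intro pow_mod_eq[OF g0]) (unfold cardN, simp add: cong_def)
    then have "(\<gamma>^i)^(q^k-1) * (\<gamma>^j)^(q^s-1) = A"
      using m by (simp add: power_add power_mult)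
    then show "\<exists>c z. c \<noteq> 0 \<and> z \<noteq> 0 \<and> c^(q^k-1) * z^(q^s-1) = A"
      using g0 by (intro exI[of _ "\<gamma>^i"] exI[of _ "\<gamma>^j"]) simp
  qed
qed

lemma egcd:
  assumes "int s = \<bar>int h + int k - int t\<bar>"
  shows "nat (gcd (int n) (gcd (int k) (int t - int h))) = gcd k (gcd s n)"
proof -
  have 1: "gcd (int k) (int t - int h) = gcd (int k) (int h + int k - int t)"
  proof -
    have "gcd (int k) (int h + int k - int t) = gcd (int k) (1 * int k + -(int t - int h))"
      by (simp add: algebra_simps)
    also have "\<dots> = gcd (int k) (-(int t - int h))" by (rule gcd_add_mult)
    also have "\<dots> = gcd (int k) (int t - int h)" by (simp only: gcd_neg2)
    finally show ?thesis by simp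
  qed
  have 2: "gcd (int k) (int s) = gcd (int k) (int h + int k - int t)" using assms by simp
  have "int (gcd k (gcd s n)) = gcd (int k) (gcd (int s) (int n))" by simp
  also have "\<dots> = gcd (gcd (int k) (int s)) (int n)" by (simp add: gcd.assoc)
  also have "\<dots> = gcd (int n) (gcd (int k) (int t - int h))" unfolding 2 1[symmetric] by (simp add: gcd.commute)
  finally show ?thesis by simp
qed

lemma pspan_scale:
  fixes c a b :: "'a::field" assumes "c \<noteq> 0"
  shows "pspan (c*a, c*b) = pspan (a, b)"
proof -
  have "{(d * (c*a), d * (c*b)) | d. True} = {(d * a, d * b) | d. True}"
  proof
    show "{(d * (c*a), d * (c*b)) | d. True} \<subseteq> {(d * a, d * b) | d. True}"
    proof
      fix p assume "p \<in> {(d * (c*a), d * (c*b)) | d. True}"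
      then obtain d where "p = (d * (c*a), d * (c*b))" by blast
      then have "p = ((d*c) * a, (d*c) * b)" by (simp add: mult.assoc)
      then show "p \<in> {(d * a, d * b) | d. True}" by blast
    qed
    show "{(d * a, d * b) | d. True} \<subseteq> {(d * (c*a), d * (c*b)) | d. True}"
    proof
      fix p assume "p \<in> {(d * a, d * b) | d. True}"
      then obtain d where "p = (d * a, d * b)" by blast
      then have "p = ((d/c) * (c*a), (d/c) * (c*b))" using assms by simp
      then show "p \<in> {(d * (c*a), d * (c*b)) | d. True}" by blast
    qed
  qed
  then show ?thesis by (simp add: pspan_def)
qed

lemma step1:
  fixes \<alpha> \<beta> a :: "'a::field" and q h k t :: nat
  assumes "\<alpha> \<noteq> 0" "q \<ge> 1"
  shows "Lf_set q h (\<lambda>y. \<beta> * y^(q^h) + a * y^(q^t)) \<inter> Lg_set (\<lambda>x. \<alpha> * x^(q^k) + \<beta> * x) \<noteq> {}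
     \<longleftrightarrow> (\<exists>c y. c \<noteq> 0 \<and> y \<noteq> 0 \<and> c^(q^k-1) * y^(q^(h+k)) = (a/\<alpha>) * y^(q^t))"
    (is "?L \<longleftrightarrow> ?R")
proof
  let ?f = "\<lambda>y. \<beta> * y^(q^h) + a * y^(q^t)" and ?g = "\<lambda>x. \<alpha> * x^(q^k) + \<beta> * x"
  have ck: "c^(q^k) = c * c^(q^k-1)" for c :: 'a
  proof -
    have "q^k \<ge> 1" using assms by simp
    then have "q^k = Suc (q^k - 1)" by simp
    then show ?thesis by (metis power_Suc)
  qed
  have yk: "(y^(q^h))^(q^k) = y^(q^(h+k))" for y :: 'a by (simp add: power_add power_mult)
  {
    assume ?L
    then obtain P where "P \<in> Lf_set q h ?f" "P \<in> Lg_set ?g" by blast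
    then obtain y x where y: "y \<noteq> 0" "P = pspan (y^(q^h), ?f y)" and x: "x \<noteq> 0" "P = pspan (x, ?g x)"
      unfolding Lf_set_def Lg_set_def by blast
    have "(x, ?g x) \<in> pspan (x, ?g x)" unfolding pspan_def by (auto intro: exI[of _ 1])
    then have "(x, ?g x) \<in> pspan (y^(q^h), ?f y)" using x y by simp
    then obtain c where c: "x = c * y^(q^h)" "?g x = c * ?f y" unfolding pspan_def by auto
    have c0: "c \<noteq> 0" using c x by auto
    have "\<alpha> * (c * y^(q^h))^(q^k) + \<beta> * (c * y^(q^h)) = c * (\<beta> * y^(q^h) + a * y^(q^t))"
      using c by simp
    then have "\<alpha> * ((c * c^(q^k-1)) * y^(q^(h+k))) + \<beta> * (c * y^(q^h)) = c * (\<beta> * y^(q^h) + a * y^(q^t))"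
      unfolding power_mult_distrib yk ck[of c] .
    then have "\<alpha> * (c * c^(q^k-1)) * y^(q^(h+k)) = c * (a * y^(q^t))"
      by (simp add: algebra_simps)
    then have "c^(q^k-1) * y^(q^(h+k)) = (a/\<alpha>) * y^(q^t)"
      using c0 assms(1) by (simp add: field_simps)
    then show ?R using c0 y by blast
  }
  {
    assume ?R
    then obtain c y where cy: "c \<noteq> 0" "y \<noteq> 0" "c^(q^k-1) * y^(q^(h+k)) = (a/\<alpha>) * y^(q^t)" by blast
    define x where "x = c * y^(q^h)"
    have x0: "x \<noteq> 0" using cy by (simp add: x_def)
    have eq: "\<alpha> * c^(q^k-1) * y^(q^(h+k)) = a * y^(q^t)"
      using cy(3) assms(1) by (simp add: field_simps)
    have "?g x = c * ?f y"
    proof -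
      have "?g x = \<alpha> * ((c * c^(q^k-1)) * y^(q^(h+k))) + \<beta> * (c * y^(q^h))"
        unfolding x_def power_mult_distrib yk ck[of c] ..
      also have "\<dots> = \<alpha> * (c * c^(q^k-1)) * y^(q^(h+k)) + \<beta> * c * y^(q^h)"
        by (simp add: algebra_simps)
      also have "\<dots> = c * (\<alpha> * c^(q^k-1) * y^(q^(h+k))) + \<beta> * c * y^(q^h)"
        by (simp add: algebra_simps)
      also have "\<dots> = c * ?f y" unfolding eq by (simp add: algebra_simps)
      finally show ?thesis .
    qed
    then have "pspan (x, ?g x) = pspan (y^(q^h), ?f y)"
      using pspan_scale[OF cy(1)] by (simp add: x_def)
    moreover have "pspan (x, ?g x) \<in> Lg_set ?g" using x0 unfolding Lg_set_def by blast
    moreover have "pspan (y^(q^h), ?f y) \<in> Lf_set q h ?f" using cy(2) unfolding Lf_set_def by blast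
    ultimately show ?L by auto
  }
qed

lemma powS: "(q::nat) \<ge> 1 \<Longrightarrow> (x::'a::field)^(q^s) = x^(q^s-1) * x"
proof -
  assume "q \<ge> 1"
  then have "q^s = Suc (q^s - 1)" by simp
  then show ?thesis by (metis power_Suc mult.commute)
qed

lemma stepA:
  fixes A :: "'a::{field,finite}" and q n h k t s :: nat
  assumes card: "CARD('a) = q^n" and q2: "q \<ge> 2" and n1: "n \<ge> 1"
    and sd: "int s = \<bar>int h + int k - int t\<bar>"
  shows "(\<exists>c y. c \<noteq> 0 \<and> y \<noteq> 0 \<and> c^(q^k-1) * y^(q^(h+k)) = A * y^(q^t))
     \<longleftrightarrow> (\<exists>c z. c \<noteq> 0 \<and> z \<noteq> 0 \<and> c^(q^k-1) * z^(q^s-1) = A)"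
proof (cases "t \<le> h + k")
  case True
  then have s: "h + k = t + s" using sd by simp
  have yy: "y^(q^(h+k)) = (y^(q^t))^(q^s-1) * y^(q^t)" for y :: 'a
    using powS[of q "y^(q^t)" s] q2 by (simp add: s power_add power_mult)
  show ?thesis
  proof
    assume "\<exists>c y. c \<noteq> 0 \<and> y \<noteq> 0 \<and> c^(q^k-1) * y^(q^(h+k)) = A * y^(q^t)"
    then obtain c y where cy: "c \<noteq> 0" "y \<noteq> 0" "c^(q^k-1) * y^(q^(h+k)) = A * y^(q^t)" by blast
    have z0: "y^(q^t) \<noteq> 0" using cy by simp
    have "(c^(q^k-1) * (y^(q^t))^(q^s-1)) * y^(q^t) = A * y^(q^t)" using cy(3) yy[of y] by (simp add: ac_simps)
    then have "c^(q^k-1) * (y^(q^t))^(q^s-1) = A" using z0 mult_cancel_right by blast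
    then show "\<exists>c z. c \<noteq> 0 \<and> z \<noteq> 0 \<and> c^(q^k-1) * z^(q^s-1) = A" using cy z0 by blast
  next
    assume "\<exists>c z. c \<noteq> 0 \<and> z \<noteq> 0 \<and> c^(q^k-1) * z^(q^s-1) = A"
    then obtain c z where cz: "c \<noteq> 0" "z \<noteq> 0" "c^(q^k-1) * z^(q^s-1) = A" by blast
    obtain y where y: "y^(q^t) = z" "y \<noteq> 0" using frob_surj[OF card n1, of t z] cz by blast
    have "c^(q^k-1) * y^(q^(h+k)) = A * y^(q^t)" using yy[of y] y cz(3) by (simp add: ac_simps)
    then show "\<exists>c y. c \<noteq> 0 \<and> y \<noteq> 0 \<and> c^(q^k-1) * y^(q^(h+k)) = A * y^(q^t)" using cz y by blast
  qed
next
  case False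
  then have s: "t = h + k + s" using sd by simp
  have yy: "y^(q^t) = (y^(q^(h+k)))^(q^s-1) * y^(q^(h+k))" for y :: 'a
    using powS[of q "y^(q^(h+k))" s] q2 by (simp add: s power_add power_mult)
  have inv: "w \<noteq> 0 \<Longrightarrow> w^m * (inverse w)^m = 1" for w :: 'a and m
    by (simp add: power_mult_distrib[symmetric])
  show ?thesis
  proof
    assume "\<exists>c y. c \<noteq> 0 \<and> y \<noteq> 0 \<and> c^(q^k-1) * y^(q^(h+k)) = A * y^(q^t)"
    then obtain c y where cy: "c \<noteq> 0" "y \<noteq> 0" "c^(q^k-1) * y^(q^(h+k)) = A * y^(q^t)" by blast
    define w where "w = y^(q^(h+k))"
    have w0: "w \<noteq> 0" using cy by (simp add: w_def)
    have "c^(q^k-1) * w = (A * w^(q^s-1)) * w" using cy(3) yy[of y] by (simp add: w_def ac_simps)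
    then have "c^(q^k-1) = A * w^(q^s-1)" using w0 mult_cancel_right by blast
    then have "c^(q^k-1) * (inverse w)^(q^s-1) = A * (w^(q^s-1) * (inverse w)^(q^s-1))" by (simp add: ac_simps)
    then have "c^(q^k-1) * (inverse w)^(q^s-1) = A" using inv[OF w0] by simp
    then show "\<exists>c z. c \<noteq> 0 \<and> z \<noteq> 0 \<and> c^(q^k-1) * z^(q^s-1) = A" using cy w0 by (intro exI[of _ c] exI[of _ "inverse w"]) simp
  next
    assume "\<exists>c z. c \<noteq> 0 \<and> z \<noteq> 0 \<and> c^(q^k-1) * z^(q^s-1) = A"
    then obtain c z where cz: "c \<noteq> 0" "z \<noteq> 0" "c^(q^k-1) * z^(q^s-1) = A" by blast
    obtain y where y: "y^(q^(h+k)) = inverse z" "y \<noteq> 0" using frob_surj[OF card n1, of "h+k" "inverse z"] cz by auto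
    have "A * y^(q^t) = c^(q^k-1) * (z^(q^s-1) * (inverse z)^(q^s-1)) * inverse z"
      using yy[of y] y cz(3) by (simp add: ac_simps)
    also have "\<dots> = c^(q^k-1) * y^(q^(h+k))" using inv[OF cz(2)] y by simp
    finally show "\<exists>c y. c \<noteq> 0 \<and> y \<noteq> 0 \<and> c^(q^k-1) * y^(q^(h+k)) = A * y^(q^t)" using cz y by metis
  qed
qed

lemma key:
  fixes \<alpha> \<beta> a :: "'a::{field,finite}" and q n k h t :: nat
  assumes card: "CARD('a) = q^n" and q2: "q \<ge> 2" and n1: "n \<ge> 1" and a0: "\<alpha> \<noteq> 0"
  shows "Lf_set q h (\<lambda>y. \<beta> * y^(q^h) + a * y^(q^t)) \<inter> Lg_set (\<lambda>x. \<alpha> * x^(q^k) + \<beta> * x) \<noteq> {}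
     \<longleftrightarrow> relnorm q n (nat (gcd (int n) (gcd (int k) (int t - int h)))) (a/\<alpha>) = 1"
proof -
  define s where "s = nat \<bar>int h + int k - int t\<bar>"
  have sd: "int s = \<bar>int h + int k - int t\<bar>" by (simp add: s_def)
  have q1: "q \<ge> 1" using q2 by simp
  have e1: "Lf_set q h (\<lambda>y. \<beta> * y^(q^h) + a * y^(q^t)) \<inter> Lg_set (\<lambda>x. \<alpha> * x^(q^k) + \<beta> * x) \<noteq> {}
     \<longleftrightarrow> (\<exists>c y. c \<noteq> 0 \<and> y \<noteq> 0 \<and> c^(q^k-1) * y^(q^(h+k)) = (a/\<alpha>) * y^(q^t))"
    by (rule step1[OF a0 q1])
  have e2: "(\<exists>c y. c \<noteq> 0 \<and> y \<noteq> 0 \<and> c^(q^k-1) * y^(q^(h+k)) = (a/\<alpha>) * y^(q^t)) \<longleftrightarrow> (\<exists>c z. c \<noteq> 0 \<and> z \<noteq> 0 \<and> c^(q^k-1) * z^(q^s-1) = a/\<alpha>)"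
    by (rule stepA[OF card q2 n1 sd])
  have e3: "(\<exists>c z. c \<noteq> 0 \<and> z \<noteq> 0 \<and> c^(q^k-1) * z^(q^s-1) = a/\<alpha>) \<longleftrightarrow> (a/\<alpha>) ^ ((q^n-1) div (q^(gcd k (gcd s n))-1)) = 1"
    by (rule core[OF card q2 n1 refl])
  have e4: "(a/\<alpha>) ^ ((q^n-1) div (q^(gcd k (gcd s n))-1)) = 1 \<longleftrightarrow> relnorm q n (nat (gcd (int n) (gcd (int k) (int t - int h)))) (a/\<alpha>) = 1"
    unfolding relnorm_def egcd[OF sd] by (rule refl)
  show ?thesis using e1 e2 e3 e4 by (simp only:)
qed

theorem proposition3p10:
  fixes q n k d l h :: nat
    and \<alpha> \<beta> a_d a_l :: "'a::{field,finite}"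
  assumes "primepow q" and "n \<ge> 2" and "CARD('a) = q ^ n"
    and "\<alpha> \<noteq> 0" and "1 \<le> k" and "k < n"
    and "l < d" and "d < n" and "a_d \<noteq> 0" and "a_l \<noteq> 0"
    and "h < n"
    and "(d = h \<and> a_d = \<beta>) \<or> (l = h \<and> a_l = \<beta>)"
  shows "(let g = (\<lambda>x::'a. \<alpha> * x ^ (q ^ k) + \<beta> * x);
              f = (\<lambda>y::'a. a_d * y ^ (q ^ d) + a_l * y ^ (q ^ l));
              t = (if h = d then l else d);
              a_t = (if h = d then a_l else a_d);
              e = nat (gcd (int n) (gcd (int k) (int t - int h)))
          in (Lf_set q h f \<inter> Lg_set g \<noteq> {} \<longleftrightarrow> relnorm q n e (a_t / \<alpha>) = 1))"
proof -
  have q2: "q \<ge> 2" using assms(1) primepow_gt_Suc_0 by fastforce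
  have n1: "n \<ge> 1" using assms(2) by simp
  note K = key[OF assms(3) q2 n1 assms(4)]
  show ?thesis
  proof (cases "h = d")
    case True
    then have b: "a_d = \<beta>" using assms(7,12) by auto
    have f: "(\<lambda>y::'a. a_d * y ^ (q ^ d) + a_l * y ^ (q ^ l)) = (\<lambda>y. \<beta> * y^(q^h) + a_l * y^(q^l))"
      using True b by simp
    show ?thesis unfolding Let_def f if_P[OF True] by (rule K)
  next
    case False
    then have b: "l = h" "a_l = \<beta>" using assms(12) by auto
    have f: "(\<lambda>y::'a. a_d * y ^ (q ^ d) + a_l * y ^ (q ^ l)) = (\<lambda>y. \<beta> * y^(q^h) + a_d * y^(q^d))"
      using b by (simp add: add.commute)
    show ?thesis unfolding Let_def f if_not_P[OF False] by (rule K)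
  qed
qed
end
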